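(* Let $\{\mathbf{Y}_n\}_{n\ge1}$ be a pMAX random field (defined in the context). Let $n\ge 1$, $r\ge 0$ and $x,x'\in\mathbb{R}^2$, and assume the tail dependence coefficients appearing below exist. (a) If $r>0$, then $$\lambda(Y_{n+r}(x')\mid Y_n(x))=\begin{cases}0, & \alpha(x)<1,\\[2pt] \tfrac12\,\lambda(X_{n+r}(x')\mid X_n(x)), & \alpha(x)=1,\\[2pt] \lambda(X_{n+r}(x')\mid X_n(x)), & \alpha(x)>1.\end{cases}$$ (b) If $r=0$ and $x\neq x'$, then $$\lambda(Y_{n}(x')\mid Y_n(x))=\begin{cases}\lambda\big(Z_n(x')^{1/\alpha(x')}\mid Z_n(x)^{1/\alpha(x)}\big), & \alpha(x)<1,\\[2pt] \tfrac12\Big(\lambda(X_{n}(x')\mid X_n(x))+\lambda\big(Z_n(x')^{1/\alpha(x')}\mid Z_n(x)^{1/\alpha(x)}\big)\Big), & \alpha(x)=1,\\[2pt] \lambda(X_{n}(x')\mid X_n(x)), & \alpha(x)>1.\end{cases}$$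
   Context: A random variable has the standard (unit) Fréchet distribution if $P(\cdot\le z)=e^{-1/z}$ for $z>0$. A pMAX random field is a sequence $\{\mathbf{Y}_n\}_{n\ge1}=\{Y_n(x):x\in\mathbb{R}^2\}_{n\ge1}$ with $Y_n(x)=X_n(x)\vee Z_n(x)^{1/\alpha(x)}$, where: (i) $\{\mathbf{X}_n\}_{n\ge1}=\{X_n(x):x\in\mathbb{R}^2\}_{n\ge1}$ is a stationary sequence of random fields with standard Fréchet marginals; (ii) $\{\mathbf{Z}_n\}_{n\ge1}=\{Z_n(x):x\in\mathbb{R}^2\}_{n\ge1}$ is a sequence of i.i.d. random fields with standard Fréchet marginals, independent of $\{\mathbf{X}_n\}$; (iii) $\alpha:\mathbb{R}^2\to(0,\infty)$ is a function. Here $a\vee b=\max(a,b)$. For random variables $U,V$, the (upper) tail dependence coefficient is $\lambda(V\mid U)=\lim_{y\to\infty}P(V>y\mid U>y)$. *)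

theory Defs
  imports "HOL-Probability.Probability"
begin

text \<open>Points of the plane are vectors in real^2.  A sequence of random fields on a
probability space M is a function  X :: nat => real^2 => 'w => real,  with
X n x the random variable X_n(x).  Only indices n >= 1 are meaningful.\<close>

definition std_frechet :: "'w measure \<Rightarrow> ('w \<Rightarrow> real) \<Rightarrow> bool" where
  "std_frechet M V \<longleftrightarrow> V \<in> borel_measurable M \<and>
     (\<forall>z::real. z > 0 \<longrightarrow> measure M {\<omega> \<in> space M. V \<omega> \<le> z} = exp (- 1 / z))"

definition field_space :: "(real^2 \<Rightarrow> real) measure" where
  "field_space = PiM UNIV (\<lambda>_. borel)"

definition seq_space :: "(nat \<Rightarrow> real^2 \<Rightarrow> real) measure" where
  "seq_space = PiM {1..} (\<lambda>_. field_space)"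

definition stationary_seq :: "'w measure \<Rightarrow> (nat \<Rightarrow> real^2 \<Rightarrow> 'w \<Rightarrow> real) \<Rightarrow> bool" where
  "stationary_seq M X \<longleftrightarrow>
     (\<forall>k::nat. \<forall>I::(nat \<times> (real^2)) set. finite I \<and> I \<subseteq> {1..} \<times> UNIV \<longrightarrow>
        distr M (PiM I (\<lambda>_. borel)) (\<lambda>\<omega>. \<lambda>i\<in>I. X (fst i + k) (snd i) \<omega>) =
        distr M (PiM I (\<lambda>_. borel)) (\<lambda>\<omega>. \<lambda>i\<in>I. X (fst i) (snd i) \<omega>))"

definition iid_seq :: "'w measure \<Rightarrow> (nat \<Rightarrow> real^2 \<Rightarrow> 'w \<Rightarrow> real) \<Rightarrow> bool" where
  "iid_seq M Z \<longleftrightarrow>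
     prob_space.indep_vars M (\<lambda>_. field_space) (\<lambda>n \<omega>. \<lambda>x. Z n x \<omega>) {1..} \<and>
     (\<forall>n\<ge>1. distr M field_space (\<lambda>\<omega> x. Z n x \<omega>) = distr M field_space (\<lambda>\<omega> x. Z 1 x \<omega>))"

definition indep_seqs :: "'w measure \<Rightarrow> (nat \<Rightarrow> real^2 \<Rightarrow> 'w \<Rightarrow> real)
    \<Rightarrow> (nat \<Rightarrow> real^2 \<Rightarrow> 'w \<Rightarrow> real) \<Rightarrow> bool" where
  "indep_seqs M X Z \<longleftrightarrow>
     prob_space.indep_var M
       seq_space (\<lambda>\<omega>. \<lambda>n\<in>{1..}. \<lambda>x. X n x \<omega>)
       seq_space (\<lambda>\<omega>. \<lambda>n\<in>{1..}. \<lambda>x. Z n x \<omega>)"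

definition pmax_Y :: "(nat \<Rightarrow> real^2 \<Rightarrow> 'w \<Rightarrow> real) \<Rightarrow> (nat \<Rightarrow> real^2 \<Rightarrow> 'w \<Rightarrow> real)
    \<Rightarrow> (real^2 \<Rightarrow> real) \<Rightarrow> nat \<Rightarrow> real^2 \<Rightarrow> 'w \<Rightarrow> real" where
  "pmax_Y X Z \<alpha> n x \<omega> = max (X n x \<omega>) (Z n x \<omega> powr (1 / \<alpha> x))"

definition pMAX :: "'w measure \<Rightarrow> (nat \<Rightarrow> real^2 \<Rightarrow> 'w \<Rightarrow> real)
    \<Rightarrow> (nat \<Rightarrow> real^2 \<Rightarrow> 'w \<Rightarrow> real) \<Rightarrow> (real^2 \<Rightarrow> real) \<Rightarrow> bool" where
  "pMAX M X Z \<alpha> \<longleftrightarrow> prob_space M \<and>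
     (\<forall>n\<ge>1. \<forall>x. std_frechet M (X n x)) \<and> stationary_seq M X \<and>
     (\<forall>n\<ge>1. \<forall>x. std_frechet M (Z n x)) \<and> iid_seq M Z \<and>
     indep_seqs M X Z \<and>
     (\<forall>x. \<alpha> x > 0)"

definition tail_ratio :: "'w measure \<Rightarrow> ('w \<Rightarrow> real) \<Rightarrow> ('w \<Rightarrow> real) \<Rightarrow> real \<Rightarrow> real" where
  "tail_ratio M V U y =
     measure M {\<omega> \<in> space M. V \<omega> > y \<and> U \<omega> > y} / measure M {\<omega> \<in> space M. U \<omega> > y}"

definition tail_dep_exists :: "'w measure \<Rightarrow> ('w \<Rightarrow> real) \<Rightarrow> ('w \<Rightarrow> real) \<Rightarrow> bool" where
  "tail_dep_exists M V U \<longleftrightarrow> (\<exists>L. (tail_ratio M V U \<longlongrightarrow> L) at_top)"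

definition tail_dep :: "'w measure \<Rightarrow> ('w \<Rightarrow> real) \<Rightarrow> ('w \<Rightarrow> real) \<Rightarrow> real" where
  "tail_dep M V U = Lim at_top (tail_ratio M V U)"

end

theory Submission
  imports Defs "HOL-Real_Asymp.Real_Asymp"
begin


lemma bnd1:
  fixes a b a' b' naa nbb N D :: real
  assumes "0<a" "a\<le>1" "0<b" "b\<le>1" "0\<le>a'" "0\<le>b'" "0\<le>naa" "naa\<le>a"
    "0\<le>nbb" "nbb\<le>b" "D = a+b-a*b" "naa \<le> N" "N \<le> naa+nbb+a'*b+b'*a"
  shows "\<bar>N/D - naa/a\<bar> \<le> 2*(b/a) + a'*(b/a) + b'"
proof -
  have Da: "a \<le> D" using assms by (simp add: mult_le_cancel_right1 mult.commute)
  have D0: "0 < D" using Da assms by linarith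
  have e1: "0 \<le> (N-naa)/D" using assms D0 by simp
  have "(N-naa)/D \<le> (b + a'*b + b'*a)/D"
    using assms D0 by (intro divide_right_mono) auto
  also have "\<dots> \<le> (b + a'*b + b'*a)/a"
    using assms Da D0 by (intro divide_left_mono) auto
  also have "\<dots> = b/a + a'*(b/a) + b'" using assms by (simp add: field_simps)
  finally have e2: "(N-naa)/D \<le> b/a + a'*(b/a) + b'" .
  have f: "naa/a - naa/D = naa*(D-a)/(a*D)" using assms D0 by (simp add: field_simps)
  have g1: "0 \<le> naa*(D-a)" using assms Da by simp
  have g2: "0 < a*D" using assms D0 by simp
  have f0: "0 \<le> naa*(D-a)/(a*D)" using g1 g2 by simp
  have "naa*(D-a)/(a*D) \<le> a*b/(a*D)"
  proof -
    have Db: "D - a \<le> b" using assms mult_nonneg_nonneg[of a b] by linarith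
    show ?thesis using assms D0 Da Db less_imp_le[OF g2] by (intro divide_right_mono mult_mono) auto
  qed
  also have "\<dots> = b/D" using assms by simp
  also have "\<dots> \<le> b/a" using assms(1-10) Da mult_pos_pos[OF D0 assms(1)] by (intro divide_left_mono) auto
  finally have f1: "naa*(D-a)/(a*D) \<le> b/a" .
  have "N/D - naa/a = (N-naa)/D - naa*(D-a)/(a*D)" using f by (simp add: diff_divide_distrib)
  then show ?thesis using e1 e2 f0 f1 unfolding abs_le_iff by linarith
qed

lemma bnd3:
  fixes a a' b' naa nbb N D :: real
  assumes "0<a" "a\<le>1" "0\<le>a'" "0\<le>b'" "0\<le>naa" "naa\<le>a"
    "0\<le>nbb" "nbb\<le>a" "D = a+a-a*a" "naa + nbb - a*a \<le> N" "N \<le> naa+nbb+a'*a+b'*a"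
  shows "\<bar>N/D - (naa/a + nbb/a)/2\<bar> \<le> 2*a + a' + b'"
proof -
  have Da: "a \<le> D" using assms by (simp add: mult_le_cancel_right1 mult.commute)
  have D0: "0 < D" using Da assms by linarith
  have "\<bar>N - (naa+nbb)\<bar> \<le> a*a + a'*a + b'*a"
    using assms mult_nonneg_nonneg[of a' a] mult_nonneg_nonneg[of b' a] mult_nonneg_nonneg[of a a]
    unfolding abs_le_iff by linarith
  then have "\<bar>N - (naa+nbb)\<bar>/D \<le> (a*a + a'*a + b'*a)/D" using D0 by (simp add: divide_right_mono)
  also have "\<dots> \<le> (a*a + a'*a + b'*a)/a" using assms Da by (intro divide_left_mono) auto
  also have "\<dots> = a + a' + b'" using assms by (simp add: field_simps)
  finally have e: "\<bar>(N - (naa+nbb))/D\<bar> \<le> a + a' + b'" using D0 by simp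
  have f: "(naa+nbb)/D - (naa/a + nbb/a)/2 = (naa+nbb)*a*a/(2*a*D)"
    using D0 assms(1) unfolding assms(9) by (simp add: field_simps)
  have f0: "0 \<le> (naa+nbb)*a*a/(2*a*D)" using assms D0 by simp
  have "(naa+nbb)*a*a/(2*a*D) \<le> (2*a)*a*a/(2*a*D)"
    using assms D0 by (intro divide_right_mono mult_right_mono) auto
  also have "\<dots> = a*a/D" using assms by simp
  also have "\<dots> \<le> a*a/a" using assms Da by (intro divide_left_mono) auto
  also have "\<dots> = a" using assms by simp
  finally have f1: "(naa+nbb)*a*a/(2*a*D) \<le> a" .
  have "N/D = (N-(naa+nbb))/D + (naa+nbb)/D" by (simp add: diff_divide_distrib)
  then show ?thesis using e[unfolded abs_le_iff] f f0 f1 unfolding abs_le_iff by linarith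
qed

definition "good a b a' b' naa nbb N D \<longleftrightarrow>
  (\<forall>\<^sub>F y in at_top. 0<a y \<and> a y\<le>1 \<and> 0<b y \<and> b y\<le>1 \<and> 0\<le>a' y \<and> 0\<le>b' y \<and>
     0\<le>naa y \<and> naa y\<le>a y \<and> 0\<le>nbb y \<and> nbb y\<le>b y \<and> D y = a y+b y-a y*b y \<and>
     naa y \<le> N y \<and> nbb y \<le> N y \<and> naa y + nbb y - a y*b y \<le> N y \<and>
     N y \<le> naa y+nbb y+a' y*b y+b' y*a y)"

lemma lim_case1:
  fixes a b a' b' naa nbb N D :: "real \<Rightarrow> real"
  assumes "good a b a' b' naa nbb N D" "(a' \<longlongrightarrow> 0) at_top" "(b' \<longlongrightarrow> 0) at_top"
    "((\<lambda>y. b y/a y) \<longlongrightarrow> 0) at_top" "((\<lambda>y. naa y/a y) \<longlongrightarrow> L) at_top"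
  shows "((\<lambda>y. N y/D y) \<longlongrightarrow> L) at_top"
proof -
  have "((\<lambda>y. N y/D y - naa y/a y) \<longlongrightarrow> 0) at_top"
  proof (rule Lim_null_comparison)
    show "\<forall>\<^sub>F y in at_top. norm (N y/D y - naa y/a y) \<le> 2*(b y/a y) + a' y*(b y/a y) + b' y"
      using assms(1) unfolding good_def by eventually_elim (elim conjE, unfold real_norm_def, rule bnd1, assumption+)
    show "((\<lambda>y. 2*(b y/a y) + a' y*(b y/a y) + b' y) \<longlongrightarrow> 0) at_top"
      using tendsto_add[OF tendsto_add[OF tendsto_mult[OF tendsto_const[of 2] assms(4)] tendsto_mult[OF assms(2) assms(4)]] assms(3)] by simp
  qed
  from tendsto_add[OF this assms(5)] show ?thesis by simp
qed

lemma lim_case2: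
  fixes a b a' b' naa nbb N D :: "real \<Rightarrow> real"
  assumes "good a b a' b' naa nbb N D" "(a' \<longlongrightarrow> 0) at_top" "(b' \<longlongrightarrow> 0) at_top"
    "((\<lambda>y. a y/b y) \<longlongrightarrow> 0) at_top" "((\<lambda>y. nbb y/b y) \<longlongrightarrow> L) at_top"
  shows "((\<lambda>y. N y/D y) \<longlongrightarrow> L) at_top"
proof -
  have "((\<lambda>y. N y/D y - nbb y/b y) \<longlongrightarrow> 0) at_top"
  proof (rule Lim_null_comparison)
    show "\<forall>\<^sub>F y in at_top. norm (N y/D y - nbb y/b y) \<le> 2*(a y/b y) + b' y*(a y/b y) + a' y"
      using assms(1) unfolding good_def
      by eventually_elim (elim conjE, unfold real_norm_def, rule bnd1, (assumption | simp add: algebra_simps)+)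
    show "((\<lambda>y. 2*(a y/b y) + b' y*(a y/b y) + a' y) \<longlongrightarrow> 0) at_top"
      using tendsto_add[OF tendsto_add[OF tendsto_mult[OF tendsto_const[of 2] assms(4)] tendsto_mult[OF assms(3) assms(4)]] assms(2)] by simp
  qed
  from tendsto_add[OF this assms(5)] show ?thesis by simp
qed

lemma lim_case3:
  fixes a b a' b' naa nbb N D :: "real \<Rightarrow> real"
  assumes "good a b a' b' naa nbb N D" "(a \<longlongrightarrow> 0) at_top" "(a' \<longlongrightarrow> 0) at_top" "(b' \<longlongrightarrow> 0) at_top"
    "\<forall>\<^sub>F y in at_top. b y = a y"
    "((\<lambda>y. naa y/a y) \<longlongrightarrow> L1) at_top" "((\<lambda>y. nbb y/b y) \<longlongrightarrow> L2) at_top"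
  shows "((\<lambda>y. N y/D y) \<longlongrightarrow> (L1+L2)/2) at_top"
proof -
  have "((\<lambda>y. N y/D y - (naa y/a y + nbb y/b y)/2) \<longlongrightarrow> 0) at_top"
  proof (rule Lim_null_comparison)
    show "\<forall>\<^sub>F y in at_top. norm (N y/D y - (naa y/a y + nbb y/b y)/2) \<le> 2*a y + a' y + b' y"
      using assms(1,5) unfolding good_def
      by eventually_elim (elim conjE, unfold real_norm_def, simp, rule bnd3, (assumption | simp add: algebra_simps)+)
    show "((\<lambda>y. 2*a y + a' y + b' y) \<longlongrightarrow> 0) at_top"
      using assms(2-4) by (auto intro!: tendsto_eq_intros)
  qed
  from tendsto_add[OF this tendsto_divide[OF tendsto_add[OF assms(6,7)], of "\<lambda>_. 2" 2]] show ?thesis by simp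
qed


lemma (in prob_space) good_pt:
  fixes A B A' B' :: "'a \<Rightarrow> real" and y :: real
  assumes [measurable]: "A \<in> borel_measurable M" "B \<in> borel_measurable M"
    "A' \<in> borel_measurable M" "B' \<in> borel_measurable M"
  and iAB: "prob {\<omega>\<in>space M. A \<omega> > y \<and> B \<omega> > y} = prob {\<omega>\<in>space M. A \<omega> > y} * prob {\<omega>\<in>space M. B \<omega> > y}"
  and iA'B: "prob {\<omega>\<in>space M. A' \<omega> > y \<and> B \<omega> > y} = prob {\<omega>\<in>space M. A' \<omega> > y} * prob {\<omega>\<in>space M. B \<omega> > y}"
  and iB'A: "prob {\<omega>\<in>space M. B' \<omega> > y \<and> A \<omega> > y} = prob {\<omega>\<in>space M. B' \<omega> > y} * prob {\<omega>\<in>space M. A \<omega> > y}"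
  defines "a \<equiv> prob {\<omega>\<in>space M. A \<omega> > y}" and "b \<equiv> prob {\<omega>\<in>space M. B \<omega> > y}"
    and "a' \<equiv> prob {\<omega>\<in>space M. A' \<omega> > y}" and "b' \<equiv> prob {\<omega>\<in>space M. B' \<omega> > y}"
    and "naa \<equiv> prob {\<omega>\<in>space M. A' \<omega> > y \<and> A \<omega> > y}"
    and "nbb \<equiv> prob {\<omega>\<in>space M. B' \<omega> > y \<and> B \<omega> > y}"
    and "N \<equiv> prob {\<omega>\<in>space M. max (A' \<omega>) (B' \<omega>) > y \<and> max (A \<omega>) (B \<omega>) > y}"
    and "D \<equiv> prob {\<omega>\<in>space M. max (A \<omega>) (B \<omega>) > y}"
  shows "a\<le>1 \<and> b\<le>1 \<and> 0\<le>a' \<and> 0\<le>b' \<and>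
     0\<le>naa \<and> naa\<le>a \<and> 0\<le>nbb \<and> nbb\<le>b \<and> D = a+b-a*b \<and>
     naa \<le> N \<and> nbb \<le> N \<and> naa + nbb - a*b \<le> N \<and>
     N \<le> naa+nbb+a'*b+b'*a"
proof -
  define SA where "SA = {\<omega>\<in>space M. A \<omega> > y}"
  define SB where "SB = {\<omega>\<in>space M. B \<omega> > y}"
  define EAA where "EAA = {\<omega>\<in>space M. A' \<omega> > y \<and> A \<omega> > y}"
  define EBB where "EBB = {\<omega>\<in>space M. B' \<omega> > y \<and> B \<omega> > y}"
  define EAB where "EAB = {\<omega>\<in>space M. A' \<omega> > y \<and> B \<omega> > y}"
  define EBA where "EBA = {\<omega>\<in>space M. B' \<omega> > y \<and> A \<omega> > y}"
  define EN where "EN = {\<omega>\<in>space M. max (A' \<omega>) (B' \<omega>) > y \<and> max (A \<omega>) (B \<omega>) > y}"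
  have [measurable]: "SA \<in> events" "SB \<in> events" "EAA \<in> events" "EBB \<in> events"
    "EAB \<in> events" "EBA \<in> events" "EN \<in> events"
    unfolding SA_def SB_def EAA_def EBB_def EAB_def EBA_def EN_def by measurable
  have ENu: "EN = ((EAA \<union> EBB) \<union> EAB) \<union> EBA"
    unfolding EN_def EAA_def EBB_def EAB_def EBA_def by (auto simp: less_max_iff_disj)
  have Du: "{\<omega>\<in>space M. max (A \<omega>) (B \<omega>) > y} = SA \<union> SB"
    unfolding SA_def SB_def by (auto simp: less_max_iff_disj)
  have SAB: "SB \<inter> SA = {\<omega>\<in>space M. A \<omega> > y \<and> B \<omega> > y}" unfolding SA_def SB_def by auto
  have "D = prob SA + prob (SB - SA)" unfolding D_def Du by (rule finite_measure_Union') auto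
  also have "prob (SB - SA) = prob SB - prob (SB \<inter> SA)" by (rule finite_measure_Diff') auto
  finally have Deq: "D = a+b-a*b" using iAB SAB unfolding a_def b_def SA_def SB_def by simp
  have "N \<le> prob ((EAA \<union> EBB) \<union> EAB) + prob EBA" unfolding N_def EN_def[symmetric] ENu
    by (rule measure_Un_le) auto
  also have "prob ((EAA \<union> EBB) \<union> EAB) \<le> prob (EAA \<union> EBB) + prob EAB" by (rule measure_Un_le) auto
  also have "prob (EAA \<union> EBB) \<le> prob EAA + prob EBB" by (rule measure_Un_le) auto
  finally have Nu: "N \<le> naa+nbb+a'*b+b'*a"
    using iA'B iB'A unfolding EAA_def EBB_def EAB_def EBA_def naa_def nbb_def a_def b_def a'_def b'_def by simp
  have u1: "prob (EAA \<union> EBB) = prob EAA + prob (EBB - EAA)" by (rule finite_measure_Union') auto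
  have u2: "prob (EBB - EAA) = prob EBB - prob (EBB \<inter> EAA)" by (rule finite_measure_Diff') auto
  have u3: "prob (EBB \<inter> EAA) \<le> prob {\<omega>\<in>space M. A \<omega> > y \<and> B \<omega> > y}"
    unfolding EBB_def EAA_def by (rule finite_measure_mono) auto
  have l1: "naa + nbb - a*b \<le> prob (EAA \<union> EBB)"
    using u1 u2 u3 iAB unfolding naa_def nbb_def a_def b_def EAA_def[symmetric] EBB_def[symmetric] by linarith
  have l2: "prob (EAA \<union> EBB) \<le> N" unfolding N_def EN_def[symmetric] ENu
    by (rule finite_measure_mono) auto
  have "naa \<le> N" unfolding N_def naa_def EN_def[symmetric] EAA_def[symmetric] ENu
    by (rule finite_measure_mono) auto
  moreover have "nbb \<le> N" unfolding N_def nbb_def EN_def[symmetric] EBB_def[symmetric] ENu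
    by (rule finite_measure_mono) auto
  moreover have "naa \<le> a" unfolding naa_def a_def by (rule finite_measure_mono) auto
  moreover have "nbb \<le> b" unfolding nbb_def b_def by (rule finite_measure_mono) auto
  ultimately show ?thesis using Deq Nu l1 l2
    unfolding a_def b_def a'_def b'_def naa_def nbb_def by auto
qed


lemma asy_fa: "((\<lambda>y::real. 1 - exp(-1/y)) \<longlongrightarrow> 0) at_top" by real_asymp
lemma asy_fb: "c > 0 \<Longrightarrow> ((\<lambda>y::real. 1 - exp (-1/(y powr c))) \<longlongrightarrow> 0) at_top" by real_asymp
lemma asy_gt: "c > 1 \<Longrightarrow> ((\<lambda>y::real. (1 - exp (-1/(y powr c))) / (1 - exp(-1/y))) \<longlongrightarrow> 0) at_top"
  by real_asymp
lemma asy_lt: "c > 0 \<Longrightarrow> c < 1 \<Longrightarrow> ((\<lambda>y::real. (1 - exp(-1/y)) / (1 - exp (-1/(y powr c)))) \<longlongrightarrow> 0) at_top"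
  by real_asymp
lemma asy_exp0: "((\<lambda>e::real. exp (-1/e)) \<longlongrightarrow> 0) (at_right 0)" by real_asymp

lemma (in prob_space) frechet_tail:
  fixes V :: "'a \<Rightarrow> real"
  assumes "std_frechet M V" "y > 0"
  shows "prob {\<omega>\<in>space M. V \<omega> > y} = 1 - exp(-1/y)"
proof -
  have [measurable]: "V \<in> borel_measurable M" using assms(1) unfolding std_frechet_def by auto
  have "{\<omega>\<in>space M. V \<omega> > y} = space M - {\<omega>\<in>space M. V \<omega> \<le> y}" by auto
  then have "prob {\<omega>\<in>space M. V \<omega> > y} = 1 - prob {\<omega>\<in>space M. V \<omega> \<le> y}"
    by (simp add: prob_compl)
  then show ?thesis using assms unfolding std_frechet_def by simp
qed

lemma (in prob_space) frechet_nonpos: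
  fixes V :: "'a \<Rightarrow> real"
  assumes "std_frechet M V"
  shows "prob {\<omega>\<in>space M. V \<omega> \<le> 0} = 0"
proof -
  have [measurable]: "V \<in> borel_measurable M" using assms(1) unfolding std_frechet_def by auto
  have "prob {\<omega>\<in>space M. V \<omega> \<le> 0} \<le> 0"
  proof (rule tendsto_le[OF _ asy_exp0 tendsto_const])
    show "(at_right (0::real)) \<noteq> bot" by simp
    show "\<forall>\<^sub>F e in at_right 0. prob {\<omega>\<in>space M. V \<omega> \<le> 0} \<le> exp (-1/e)"
      unfolding eventually_at_right_less
    proof -
      show "\<forall>\<^sub>F e in at_right 0. prob {\<omega>\<in>space M. V \<omega> \<le> 0} \<le> exp (-1/e)"
        using eventually_at_right_less[of 0]
      proof eventually_elim
        case (elim e)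
        have "prob {\<omega>\<in>space M. V \<omega> \<le> 0} \<le> prob {\<omega>\<in>space M. V \<omega> \<le> e}"
          using elim by (intro finite_measure_mono) auto
        also have "\<dots> = exp (-1/e)" using assms elim unfolding std_frechet_def by simp
        finally show ?case .
      qed
    qed
  qed
  then show ?thesis by (simp add: antisym)
qed

lemma (in prob_space) frechet_powr_tail:
  fixes Z :: "'a \<Rightarrow> real"
  assumes "std_frechet M Z" "c > 0" "y > 0"
  shows "prob {\<omega>\<in>space M. Z \<omega> powr (1/c) > y} = 1 - exp(-1/(y powr c))"
proof -
  have [measurable]: "Z \<in> borel_measurable M" using assms(1) unfolding std_frechet_def by auto
  have yc: "y powr c > 0" using assms by simp
  let ?S = "{\<omega>\<in>space M. Z \<omega> powr (1/c) > y}"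
  let ?T = "{\<omega>\<in>space M. Z \<omega> > y powr c}"
  let ?N = "{\<omega>\<in>space M. Z \<omega> \<le> 0}"
  have TS: "?T \<subseteq> ?S"
  proof
    fix \<omega> assume "\<omega> \<in> ?T"
    then have "\<omega> \<in> space M" "Z \<omega> > y powr c" by auto
    then have "(y powr c) powr (1/c) < Z \<omega> powr (1/c)"
      using yc assms by (intro powr_less_mono2) auto
    then show "\<omega> \<in> ?S" using \<open>\<omega> \<in> space M\<close> assms by (simp add: powr_powr)
  qed
  have ST: "?S \<subseteq> ?T \<union> ?N"
  proof
    fix \<omega> assume "\<omega> \<in> ?S"
    then have sp: "\<omega> \<in> space M" and l: "Z \<omega> powr (1/c) > y" by auto
    show "\<omega> \<in> ?T \<union> ?N"
    proof (cases "Z \<omega> > 0")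
      case True
      have "y powr c < (Z \<omega> powr (1/c)) powr c"
        using l assms by (intro powr_less_mono2) auto
      then show ?thesis using True sp assms by (simp add: powr_powr)
    qed (use sp in auto)
  qed
  have "prob ?S \<le> prob (?T \<union> ?N)" using ST by (intro finite_measure_mono) auto
  also have "\<dots> \<le> prob ?T + prob ?N" by (rule measure_Un_le) auto
  also have "prob ?N = 0" using frechet_nonpos[OF assms(1)] .
  finally have "prob ?S \<le> prob ?T" by simp
  moreover have "prob ?T \<le> prob ?S" using TS by (intro finite_measure_mono) auto
  ultimately have "prob ?S = prob ?T" by simp
  also have "\<dots> = 1 - exp(-1/(y powr c))" by (rule frechet_tail[OF assms(1) yc])
  finally show ?thesis .
qed

lemma (in prob_space) indep_prod:
  fixes U V :: "'a \<Rightarrow> real"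
  assumes "indep_var borel U borel V"
  shows "prob {\<omega>\<in>space M. U \<omega> > s \<and> V \<omega> > t} =
    prob {\<omega>\<in>space M. U \<omega> > s} * prob {\<omega>\<in>space M. V \<omega> > t}"
proof -
  have "prob ((\<lambda>x. (U x, V x)) -` ({s<..} \<times> {t<..}) \<inter> space M) =
    prob (U -` {s<..} \<inter> space M) * prob (V -` {t<..} \<inter> space M)"
    by (rule indep_varD[OF assms]) (auto intro!: borel_open)
  moreover have "(\<lambda>x. (U x, V x)) -` ({s<..} \<times> {t<..}) \<inter> space M = {\<omega>\<in>space M. U \<omega> > s \<and> V \<omega> > t}" by auto
  moreover have "U -` {s<..} \<inter> space M = {\<omega>\<in>space M. U \<omega> > s}" by auto
  moreover have "V -` {t<..} \<inter> space M = {\<omega>\<in>space M. V \<omega> > t}" by auto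
  ultimately show ?thesis by simp
qed

lemma (in prob_space) indep_var_comp:
  assumes "indep_var borel U borel V" "f \<in> borel_measurable borel" "g \<in> borel_measurable borel"
  shows "indep_var borel (\<lambda>\<omega>. f (U \<omega>)) borel (\<lambda>\<omega>. g (V \<omega>))"
  using indep_var_compose[OF assms] by (simp add: comp_def)

lemma (in prob_space) indep_set_sym:
  assumes "indep_set A B" shows "indep_set B A"
proof -
  have H: "A \<subseteq> events" "B \<subseteq> events" "\<forall>a\<in>A. \<forall>b\<in>B. prob (a \<inter> b) = prob a * prob b"
    using assms unfolding indep_sets2_eq by auto
  have "\<forall>a\<in>B. \<forall>b\<in>A. prob (a \<inter> b) = prob a * prob b"
  proof (intro ballI)
    fix a b assume "a \<in> B" "b \<in> A"
    then have "prob (b \<inter> a) = prob b * prob a" using H(3) by blast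
    then show "prob (a \<inter> b) = prob a * prob b" by (simp add: Int_commute mult.commute)
  qed
  then show ?thesis using H unfolding indep_sets2_eq by auto
qed

lemma (in prob_space) indep_var_sym:
  "indep_var S U T V \<Longrightarrow> indep_var T V S U"
  unfolding indep_var_eq using indep_set_sym by blast



lemma (in prob_space) XZ_indep:
  assumes "indep_seqs M X Z" "m \<ge> 1" "k \<ge> 1"
  shows "indep_var borel (X m u) borel (Z k v)"
proof -
  have ms: "\<And>j w. j \<ge> 1 \<Longrightarrow> (\<lambda>s::nat \<Rightarrow> real^2 \<Rightarrow> real. s j w) \<in> measurable seq_space borel"
  proof -
    fix j w assume j: "(j::nat) \<ge> 1"
    have "(\<lambda>f::real^2 \<Rightarrow> real. f w) \<circ> (\<lambda>s::nat \<Rightarrow> real^2 \<Rightarrow> real. s j) \<in> measurable seq_space borel"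
    proof (rule measurable_comp)
      show "(\<lambda>s::nat \<Rightarrow> real^2 \<Rightarrow> real. s j) \<in> measurable seq_space field_space"
        unfolding seq_space_def by (rule measurable_component_singleton) (use j in auto)
      show "(\<lambda>f::real^2 \<Rightarrow> real. f w) \<in> measurable field_space borel"
        unfolding field_space_def by (rule measurable_component_singleton) auto
    qed
    then show "(\<lambda>s::nat \<Rightarrow> real^2 \<Rightarrow> real. s j w) \<in> measurable seq_space borel" by (simp add: comp_def)
  qed
  have "indep_var borel ((\<lambda>s. s m u) \<circ> (\<lambda>\<omega>. \<lambda>n\<in>{1..}. \<lambda>x. X n x \<omega>))
                  borel ((\<lambda>s. s k v) \<circ> (\<lambda>\<omega>. \<lambda>n\<in>{1..}. \<lambda>x. Z n x \<omega>))"
    using assms(1) unfolding indep_seqs_def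
    by (rule indep_var_compose) (use ms assms in auto)
  moreover have "((\<lambda>s. s m u) \<circ> (\<lambda>\<omega>. \<lambda>n\<in>{1..}. \<lambda>x. X n x \<omega>)) = X m u"
    using assms by (auto simp: fun_eq_iff)
  moreover have "((\<lambda>s. s k v) \<circ> (\<lambda>\<omega>. \<lambda>n\<in>{1..}. \<lambda>x. Z n x \<omega>)) = Z k v"
    using assms by (auto simp: fun_eq_iff)
  ultimately show ?thesis by simp
qed

lemma (in prob_space) ZZ_indep:
  assumes "iid_seq M Z" "m \<ge> 1" "k \<ge> 1" "m \<noteq> k"
  shows "indep_var borel (Z m u) borel (Z k v)"
proof -
  have iv: "indep_vars (\<lambda>_. field_space) (\<lambda>n \<omega>. \<lambda>x. Z n x \<omega>) {1..}"
    using assms(1) unfolding iid_seq_def by auto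
  have ms: "\<And>j w. (\<lambda>s::nat \<Rightarrow> real^2 \<Rightarrow> real. s j w) \<in> measurable (PiM {j} (\<lambda>_. field_space)) borel"
  proof -
    fix j w
    have "(\<lambda>f::real^2 \<Rightarrow> real. f w) \<circ> (\<lambda>s::nat \<Rightarrow> real^2 \<Rightarrow> real. s j) \<in> measurable (PiM {j} (\<lambda>_. field_space)) borel"
    proof (rule measurable_comp)
      show "(\<lambda>s::nat \<Rightarrow> real^2 \<Rightarrow> real. s j) \<in> measurable (PiM {j} (\<lambda>_. field_space)) field_space"
        by (rule measurable_component_singleton) auto
      show "(\<lambda>f::real^2 \<Rightarrow> real. f w) \<in> measurable field_space borel"
        unfolding field_space_def by (rule measurable_component_singleton) auto
    qed
    then show "(\<lambda>s::nat \<Rightarrow> real^2 \<Rightarrow> real. s j w) \<in> measurable (PiM {j} (\<lambda>_. field_space)) borel" by (simp add: comp_def)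
  qed
  have "indep_var borel ((\<lambda>s. s m u) \<circ> (\<lambda>\<omega>. restrict (\<lambda>i. \<lambda>x. Z i x \<omega>) {m}))
                  borel ((\<lambda>s. s k v) \<circ> (\<lambda>\<omega>. restrict (\<lambda>i. \<lambda>x. Z i x \<omega>) {k}))"
    by (rule indep_var_compose[OF indep_var_restrict[OF iv]]) (use assms ms in auto)
  then show ?thesis by (simp add: comp_def)
qed

lemma tail_dep_tendsto:
  assumes "tail_dep_exists M V U"
  shows "(tail_ratio M V U \<longlongrightarrow> tail_dep M V U) at_top"
proof -
  obtain L where L: "(tail_ratio M V U \<longlongrightarrow> L) at_top"
    using assms unfolding tail_dep_exists_def by auto
  have "tail_dep M V U = L" unfolding tail_dep_def by (rule tendsto_Lim) (use L in auto)
  then show ?thesis using L by simp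
qed

lemma tail_dep_eq:
  assumes "(tail_ratio M V U \<longlongrightarrow> L) at_top"
  shows "tail_dep M V U = L"
  unfolding tail_dep_def by (rule tendsto_Lim) (use assms in auto)



theorem mainTheorem1:
  fixes M :: "'w measure"
    and X Z :: "nat \<Rightarrow> real^2 \<Rightarrow> 'w \<Rightarrow> real"
    and \<alpha> :: "real^2 \<Rightarrow> real"
    and n r :: nat and x x' :: "real^2"
  defines "Y \<equiv> pmax_Y X Z \<alpha>"
  assumes pmax: "pMAX M X Z \<alpha>"
    and n: "n \<ge> 1"
    and exY: "tail_dep_exists M (Y (n + r) x') (Y n x)"
    and exX: "\<alpha> x \<ge> 1 \<Longrightarrow> tail_dep_exists M (X (n + r) x') (X n x)"
    and exZ: "r = 0 \<Longrightarrow> \<alpha> x \<le> 1 \<Longrightarrow>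
      tail_dep_exists M (\<lambda>\<omega>. Z n x' \<omega> powr (1 / \<alpha> x')) (\<lambda>\<omega>. Z n x \<omega> powr (1 / \<alpha> x))"
  shows "(r > 0 \<longrightarrow>
            tail_dep M (Y (n + r) x') (Y n x) =
              (if \<alpha> x < 1 then 0
               else if \<alpha> x = 1 then tail_dep M (X (n + r) x') (X n x) / 2
               else tail_dep M (X (n + r) x') (X n x)))
       \<and> (r = 0 \<and> x \<noteq> x' \<longrightarrow>
            tail_dep M (Y n x') (Y n x) =
              (if \<alpha> x < 1 then
                 tail_dep M (\<lambda>\<omega>. Z n x' \<omega> powr (1 / \<alpha> x')) (\<lambda>\<omega>. Z n x \<omega> powr (1 / \<alpha> x))
               else if \<alpha> x = 1 then
                 (tail_dep M (X n x') (X n x) +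
                  tail_dep M (\<lambda>\<omega>. Z n x' \<omega> powr (1 / \<alpha> x')) (\<lambda>\<omega>. Z n x \<omega> powr (1 / \<alpha> x))) / 2
               else tail_dep M (X n x') (X n x)))"
proof -
  have P: "prob_space M" and fX: "\<And>k u. k \<ge> 1 \<Longrightarrow> std_frechet M (X k u)"
    and fZ: "\<And>k u. k \<ge> 1 \<Longrightarrow> std_frechet M (Z k u)"
    and iid: "iid_seq M Z" and ind: "indep_seqs M X Z" and apos: "\<And>u. \<alpha> u > 0"
    using pmax unfolding pMAX_def by auto
  interpret prob_space M by (rule P)
  define m where "m = n + r"
  have m1: "m \<ge> 1" using n by (simp add: m_def)
  define A where "A = X n x"
  define B where "B = (\<lambda>\<omega>. Z n x \<omega> powr (1 / \<alpha> x))"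
  define A' where "A' = X m x'"
  define B' where "B' = (\<lambda>\<omega>. Z m x' \<omega> powr (1 / \<alpha> x'))"
  have mX: "\<And>k u. k \<ge> 1 \<Longrightarrow> X k u \<in> borel_measurable M" using fX unfolding std_frechet_def by auto
  have mZ: "\<And>k u. k \<ge> 1 \<Longrightarrow> Z k u \<in> borel_measurable M" using fZ unfolding std_frechet_def by auto
  have mZp: "\<And>k u c. k \<ge> 1 \<Longrightarrow> (\<lambda>\<omega>. Z k u \<omega> powr c) \<in> borel_measurable M"
    using mZ by (intro powr_real_measurable) auto
  have meas: "A \<in> borel_measurable M" "B \<in> borel_measurable M" "A' \<in> borel_measurable M" "B' \<in> borel_measurable M"
    unfolding A_def B_def A'_def B'_def using mX mZp n m1 by auto
  have iXZ: "\<And>k l u v c. k \<ge> 1 \<Longrightarrow> l \<ge> 1 \<Longrightarrow> indep_var borel (X k u) borel (\<lambda>\<omega>. Z l v \<omega> powr c)"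
  proof -
    fix k l u v c assume "(k::nat) \<ge> 1" "(l::nat) \<ge> 1"
    from indep_var_comp[OF XZ_indep[OF ind this, of u v], of "\<lambda>t. t" "\<lambda>t. t powr c"]
    show "indep_var borel (X k u) borel (\<lambda>\<omega>. Z l v \<omega> powr c)" by simp
  qed
  have iAB: "\<And>y. prob {\<omega>\<in>space M. A \<omega> > y \<and> B \<omega> > y} = prob {\<omega>\<in>space M. A \<omega> > y} * prob {\<omega>\<in>space M. B \<omega> > y}"
    unfolding A_def B_def by (rule indep_prod[OF iXZ[OF n n]])
  have iA'B: "\<And>y. prob {\<omega>\<in>space M. A' \<omega> > y \<and> B \<omega> > y} = prob {\<omega>\<in>space M. A' \<omega> > y} * prob {\<omega>\<in>space M. B \<omega> > y}"
    unfolding A'_def B_def by (rule indep_prod[OF iXZ[OF m1 n]])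
  have iB'A: "\<And>y. prob {\<omega>\<in>space M. B' \<omega> > y \<and> A \<omega> > y} = prob {\<omega>\<in>space M. B' \<omega> > y} * prob {\<omega>\<in>space M. A \<omega> > y}"
    unfolding A_def B'_def by (rule indep_prod[OF indep_var_sym[OF iXZ[OF n m1]]])
  define a where "a = (\<lambda>y. prob {\<omega>\<in>space M. A \<omega> > y})"
  define b where "b = (\<lambda>y. prob {\<omega>\<in>space M. B \<omega> > y})"
  define a' where "a' = (\<lambda>y. prob {\<omega>\<in>space M. A' \<omega> > y})"
  define b' where "b' = (\<lambda>y. prob {\<omega>\<in>space M. B' \<omega> > y})"
  define naa where "naa = (\<lambda>y. prob {\<omega>\<in>space M. A' \<omega> > y \<and> A \<omega> > y})"
  define nbb where "nbb = (\<lambda>y. prob {\<omega>\<in>space M. B' \<omega> > y \<and> B \<omega> > y})"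
  define N where "N = (\<lambda>y. prob {\<omega>\<in>space M. max (A' \<omega>) (B' \<omega>) > y \<and> max (A \<omega>) (B \<omega>) > y})"
  define D where "D = (\<lambda>y. prob {\<omega>\<in>space M. max (A \<omega>) (B \<omega>) > y})"
  define fa where "fa = (\<lambda>y::real. 1 - exp(-1/y))"
  define fb where "fb = (\<lambda>c y::real. 1 - exp(-1/(y powr c)))"
  have ea: "\<forall>\<^sub>F y in at_top. a y = fa y"
    using eventually_gt_at_top[of 0] by eventually_elim
      (simp add: a_def A_def fa_def frechet_tail[OF fX[OF n]])
  have ea': "\<forall>\<^sub>F y in at_top. a' y = fa y"
    using eventually_gt_at_top[of 0] by eventually_elim
      (simp add: a'_def A'_def fa_def frechet_tail[OF fX[OF m1]])
  have eb: "\<forall>\<^sub>F y in at_top. b y = fb (\<alpha> x) y"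
    using eventually_gt_at_top[of 0] by eventually_elim
      (simp add: b_def B_def fb_def frechet_powr_tail[OF fZ[OF n] apos])
  have eb': "\<forall>\<^sub>F y in at_top. b' y = fb (\<alpha> x') y"
    using eventually_gt_at_top[of 0] by eventually_elim
      (simp add: b'_def B'_def fb_def frechet_powr_tail[OF fZ[OF m1] apos])
  have fapos: "\<forall>\<^sub>F y in at_top. fa y > 0"
    using eventually_gt_at_top[of 0] by eventually_elim (simp add: fa_def)
  have fbpos: "\<And>c. \<forall>\<^sub>F y in at_top. fb c y > 0"
    using eventually_gt_at_top[of 0] by eventually_elim (simp add: fb_def)
  have pos: "\<forall>\<^sub>F y in at_top. 0 < a y \<and> 0 < b y"
    using ea eb fapos fbpos[of "\<alpha> x"] by eventually_elim simp
  have good: "good a b a' b' naa nbb N D"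
    unfolding good_def using pos
  proof eventually_elim
    case (elim y)
    from good_pt[OF meas iAB[of y] iA'B[of y] iB'A[of y]] elim
    show ?case unfolding a_def b_def a'_def b'_def naa_def nbb_def N_def D_def by auto
  qed
  have la: "(a \<longlongrightarrow> 0) at_top"
    by (rule Lim_transform_eventually[OF asy_fa]) (use ea in \<open>eventually_elim, simp add: fa_def\<close>)
  have la': "(a' \<longlongrightarrow> 0) at_top"
    by (rule Lim_transform_eventually[OF asy_fa]) (use ea' in \<open>eventually_elim, simp add: fa_def\<close>)
  have lb': "(b' \<longlongrightarrow> 0) at_top"
    by (rule Lim_transform_eventually[OF asy_fb[OF apos]]) (use eb' in \<open>eventually_elim, simp add: fb_def\<close>)
  have YY: "Y m x' = (\<lambda>\<omega>. max (A' \<omega>) (B' \<omega>))" "Y n x = (\<lambda>\<omega>. max (A \<omega>) (B \<omega>))"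
    by (simp_all add: Y_def pmax_Y_def A_def B_def A'_def B'_def fun_eq_iff)
  have TR: "tail_ratio M (Y m x') (Y n x) = (\<lambda>y. N y / D y)"
    unfolding YY by (simp add: tail_ratio_def N_def D_def fun_eq_iff)
  have TRX: "tail_ratio M A' A = (\<lambda>y. naa y / a y)"
    by (simp add: tail_ratio_def naa_def a_def fun_eq_iff)
  have TRZ: "tail_ratio M B' B = (\<lambda>y. nbb y / b y)"
    by (simp add: tail_ratio_def nbb_def b_def fun_eq_iff)
  have LX: "\<alpha> x \<ge> 1 \<Longrightarrow> ((\<lambda>y. naa y / a y) \<longlongrightarrow> tail_dep M A' A) at_top"
    using tail_dep_tendsto[OF exX] unfolding TRX[symmetric] A'_def A_def m_def by simp
  have LZ: "r = 0 \<Longrightarrow> \<alpha> x \<le> 1 \<Longrightarrow> ((\<lambda>y. nbb y / b y) \<longlongrightarrow> tail_dep M B' B) at_top"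
    using tail_dep_tendsto[OF exZ] unfolding TRZ[symmetric] B'_def B_def m_def by simp
  have LZ0: "r > 0 \<Longrightarrow> ((\<lambda>y. nbb y / b y) \<longlongrightarrow> 0) at_top"
  proof -
    assume r: "r > 0"
    have "m \<noteq> n" using r by (simp add: m_def)
    have iBB: "indep_var borel B' borel B"
      unfolding B'_def B_def
      using indep_var_comp[OF ZZ_indep[OF iid m1 n \<open>m \<noteq> n\<close>, of x' x], of "\<lambda>t. t powr (1/\<alpha> x')" "\<lambda>t. t powr (1/\<alpha> x)"]
      by simp
    have "\<forall>\<^sub>F y in at_top. nbb y / b y = b' y"
      using pos
    proof eventually_elim
      case (elim y)
      then show ?case using indep_prod[OF iBB, of y y] unfolding nbb_def b_def b'_def by simp
    qed
    then have "\<forall>\<^sub>F y in at_top. b' y = nbb y / b y" by (simp add: eq_commute)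
    then show ?thesis by (rule Lim_transform_eventually[OF lb'])
  qed
  have R: "((\<lambda>y. N y / D y) \<longlongrightarrow>
      (if \<alpha> x < 1 then (if r > 0 then 0 else tail_dep M B' B)
       else if \<alpha> x = 1 then (tail_dep M A' A + (if r > 0 then 0 else tail_dep M B' B)) / 2
       else tail_dep M A' A)) at_top"
  proof (cases "\<alpha> x < 1")
    case True
    have q: "((\<lambda>y. a y / b y) \<longlongrightarrow> 0) at_top"
    proof -
      have "\<forall>\<^sub>F y in at_top. (1 - exp(-1/y)) / (1 - exp (-1/(y powr \<alpha> x))) = a y / b y"
        using ea eb by eventually_elim (simp add: fa_def fb_def)
      then show ?thesis by (rule Lim_transform_eventually[OF asy_lt[OF apos True]])
    qed
    show ?thesis
    proof (cases "r > 0")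
      case True
      with lim_case2[OF good la' lb' q LZ0] \<open>\<alpha> x < 1\<close> show ?thesis by simp
    next
      case False
      with lim_case2[OF good la' lb' q LZ] \<open>\<alpha> x < 1\<close> show ?thesis by simp
    qed
  next
    case False
    show ?thesis
    proof (cases "\<alpha> x = 1")
      case True
      have ab: "\<forall>\<^sub>F y in at_top. b y = a y"
        using ea eb eventually_gt_at_top[of 0] by eventually_elim (simp add: fa_def fb_def True)
      show ?thesis
      proof (cases "r > 0")
        case r: True
        with lim_case3[OF good la la' lb' ab LX LZ0] True show ?thesis by simp
      next
        case r: False
        with lim_case3[OF good la la' lb' ab LX LZ] True show ?thesis by simp
      qed
    next
      case False2: False
      have gt: "\<alpha> x > 1" using False False2 by simp
      have q: "((\<lambda>y. b y / a y) \<longlongrightarrow> 0) at_top"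
      proof -
        have "\<forall>\<^sub>F y in at_top. (1 - exp (-1/(y powr \<alpha> x))) / (1 - exp(-1/y)) = b y / a y"
          using ea eb by eventually_elim (simp add: fa_def fb_def)
        then show ?thesis by (rule Lim_transform_eventually[OF asy_gt[OF gt]])
      qed
      from lim_case1[OF good la' lb' q LX] gt show ?thesis by simp
    qed
  qed
  have main: "tail_dep M (Y m x') (Y n x) =
      (if \<alpha> x < 1 then (if r > 0 then 0 else tail_dep M B' B)
       else if \<alpha> x = 1 then (tail_dep M A' A + (if r > 0 then 0 else tail_dep M B' B)) / 2
       else tail_dep M A' A)"
    by (rule tail_dep_eq) (use R TR in simp)
  show ?thesis
  proof (intro conjI impI)
    assume "r > 0"
    then show "tail_dep M (Y (n + r) x') (Y n x) =
              (if \<alpha> x < 1 then 0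
               else if \<alpha> x = 1 then tail_dep M (X (n + r) x') (X n x) / 2
               else tail_dep M (X (n + r) x') (X n x))"
      using main unfolding m_def A'_def A_def by simp
  next
    assume "r = 0 \<and> x \<noteq> x'"
    then have r: "r = 0" by simp
    then show "tail_dep M (Y n x') (Y n x) =
              (if \<alpha> x < 1 then
                 tail_dep M (\<lambda>\<omega>. Z n x' \<omega> powr (1 / \<alpha> x')) (\<lambda>\<omega>. Z n x \<omega> powr (1 / \<alpha> x))
               else if \<alpha> x = 1 then
                 (tail_dep M (X n x') (X n x) +
                  tail_dep M (\<lambda>\<omega>. Z n x' \<omega> powr (1 / \<alpha> x')) (\<lambda>\<omega>. Z n x \<omega> powr (1 / \<alpha> x))) / 2
               else tail_dep M (X n x') (X n x))"
      using main unfolding m_def A'_def A_def B'_def B_def by simp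
  qed
qed

end
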